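(* Let $\mathbb{R}^{3,1}$ denote $\mathbb{R}^4$ with the inner product $\langle\langle X,Y\rangle\rangle = X_1Y_1+X_2Y_2+X_3Y_3-X_4Y_4$. Let $S\colon \mathbb{R}^2\to\mathbb{R}^{3,1}$ be a regular smooth net and let $P$ be an attached tangent isotropic hyperplane congruence of $S$ (definitions in the context). Let $N(u,v)$ be a normal vector (with respect to $\langle\langle\cdot,\cdot\rangle\rangle$) to $P(u,v)$ depending smoothly on $(u,v)$, and set $$L_P:=\langle\langle S_{uu},N\rangle\rangle=-\langle\langle S_u,N_u\rangle\rangle,\quad M_P:=\langle\langle S_{uv},N\rangle\rangle=-\langle\langle S_u,N_v\rangle\rangle=-\langle\langle S_v,N_u\rangle\rangle,\quad N_P:=\langle\langle S_{vv},N\rangle\rangle=-\langle\langle S_v,N_v\rangle\rangle .$$ Then two non-parallel tangent vectors $A=a_1S_u+a_2S_v$ and $B=b_1S_u+b_2S_v$ at a surface point $S(u,v)$ are L-conjugate with respect to $P$ if and only if $$L_Pa_1b_1+M_P(a_1b_2+a_2b_1)+N_Pa_2b_2=0 .$$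
   Context: An isotropic hyperplane ($\gamma$-hyperplane) in $\mathbb{R}^{3,1}$ is a hyperplane of the form $\{(x,x_4)\in\mathbb{R}^3\times\mathbb{R}: x_4=\langle n,x\rangle+h\}$ with $n\in\mathbb{R}^3$ a Euclidean unit vector and $h\in\mathbb{R}$; its normal vector $(n,1)$ is isotropic. A regular smooth net is a smooth map $S\colon\mathbb{R}^2\to\mathbb{R}^{3,1}$ with $S_u(u,v)$ not parallel to $S_v(u,v)$ at every $(u,v)$. An attached tangent isotropic hyperplane congruence is a smooth map $P$ assigning to each $(u,v)$ an isotropic hyperplane $P(u,v)$ such that $S(u,v)\in P(u,v)$ and $S_u(u,v),S_v(u,v)$ are parallel to $P(u,v)$. A reparametrization of $(S,P)$ is $(S\circ D,P\circ D)$ for a diffeomorphism $D\colon\mathbb{R}^2\to\mathbb{R}^2$. Two non-parallel tangent vectors $T_1,T_2$ at a surface point $X=S(u,v)$ are called L-conjugate with respect to $P$ if there is a reparametrization $(\bar S,\bar P)$ of $(S,P)$ such that, at the parameter corresponding to $X$, $\bar S_u\parallel T_1$, $\bar S_v\parallel T_2$, and $\bar S_u,\bar S_v,\bar S_{uv}$ are all parallel to the hyperplane $\bar P$. *)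

theory Defs
  imports "HOL-Analysis.Analysis"
begin

definition mink :: "real^4 \<Rightarrow> real^4 \<Rightarrow> real" where
  "mink X Y = X$1 * Y$1 + X$2 * Y$2 + X$3 * Y$3 - X$4 * Y$4"

text \<open>An isotropic hyperplane is encoded by its data (n,h), n a Euclidean unit vector of R^3.\<close>
type_synonym gamma_plane = "(real^3) \<times> real"

definition valid_plane :: "gamma_plane \<Rightarrow> bool" where
  "valid_plane P = (norm (fst P) = 1)"

definition plane_points :: "gamma_plane \<Rightarrow> (real^4) set" where
  "plane_points P = {X. X$4 = (fst P)$1 * X$1 + (fst P)$2 * X$2 + (fst P)$3 * X$3 + snd P}"

definition par_plane :: "gamma_plane \<Rightarrow> real^4 \<Rightarrow> bool" where
  "par_plane P Y = (Y$4 = (fst P)$1 * Y$1 + (fst P)$2 * Y$2 + (fst P)$3 * Y$3)"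

definition vpar :: "'a::real_vector \<Rightarrow> 'a \<Rightarrow> bool" where
  "vpar X Y = (X \<noteq> 0 \<and> Y \<noteq> 0 \<and> (\<exists>c. X = c *\<^sub>R Y))"

definition nonpar :: "'a::real_vector \<Rightarrow> 'a \<Rightarrow> bool" where
  "nonpar X Y = ((\<forall>c. X \<noteq> c *\<^sub>R Y) \<and> (\<forall>c. Y \<noteq> c *\<^sub>R X))"

fun Ck :: "nat \<Rightarrow> (real \<times> real \<Rightarrow> 'a::real_normed_vector) \<Rightarrow> bool" where
  "Ck 0 f = continuous_on UNIV f"
| "Ck (Suc k) f = (\<exists>fu fv. (\<forall>p. (f has_derivative (\<lambda>(du, dv). du *\<^sub>R fu p + dv *\<^sub>R fv p)) (at p))
                        \<and> Ck k fu \<and> Ck k fv)"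

definition smooth2 :: "(real \<times> real \<Rightarrow> 'a::real_normed_vector) \<Rightarrow> bool" where
  "smooth2 f = (\<forall>k. Ck k f)"

definition pu :: "(real \<times> real \<Rightarrow> 'a::real_normed_vector) \<Rightarrow> real \<times> real \<Rightarrow> 'a" where
  "pu f p = vector_derivative (\<lambda>t. f (t, snd p)) (at (fst p))"

definition pv :: "(real \<times> real \<Rightarrow> 'a::real_normed_vector) \<Rightarrow> real \<times> real \<Rightarrow> 'a" where
  "pv f p = vector_derivative (\<lambda>t. f (fst p, t)) (at (snd p))"

definition regular_net :: "(real \<times> real \<Rightarrow> real^4) \<Rightarrow> bool" where
  "regular_net S = (smooth2 S \<and> (\<forall>p. nonpar (pu S p) (pv S p)))"

definition tangent_congruence :: "(real \<times> real \<Rightarrow> real^4) \<Rightarrow> (real \<times> real \<Rightarrow> gamma_plane) \<Rightarrow> bool" where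
  "tangent_congruence S P = (smooth2 P \<and> (\<forall>p. valid_plane (P p) \<and> S p \<in> plane_points (P p)
      \<and> par_plane (P p) (pu S p) \<and> par_plane (P p) (pv S p)))"

definition diffeo2 :: "(real \<times> real \<Rightarrow> real \<times> real) \<Rightarrow> bool" where
  "diffeo2 D = (bij D \<and> smooth2 D \<and> smooth2 (inv D))"

text \<open>L-conjugacy of tangent vectors T1, T2 at the surface point with parameter p.
  The reparametrized pair is (S o D, P o D), and the parameter corresponding to p is q with D q = p.\<close>
definition L_conjugate :: "(real \<times> real \<Rightarrow> real^4) \<Rightarrow> (real \<times> real \<Rightarrow> gamma_plane)
    \<Rightarrow> real \<times> real \<Rightarrow> real^4 \<Rightarrow> real^4 \<Rightarrow> bool" where
  "L_conjugate S P p T1 T2 = (nonpar T1 T2 \<and>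
     (\<exists>D q. diffeo2 D \<and> D q = p \<and>
        (let Sb = S \<circ> D; Pb = P \<circ> D in
           vpar (pu Sb q) T1 \<and> vpar (pv Sb q) T2 \<and>
           par_plane (Pb q) (pu Sb q) \<and> par_plane (Pb q) (pv Sb q) \<and>
           par_plane (Pb q) (pv (pu Sb) q))))"

definition normal_field :: "(real \<times> real \<Rightarrow> gamma_plane) \<Rightarrow> (real \<times> real \<Rightarrow> real^4) \<Rightarrow> bool" where
  "normal_field P N = (smooth2 N \<and> (\<forall>p. N p \<noteq> 0 \<and> (\<forall>Y. par_plane (P p) Y \<longrightarrow> mink (N p) Y = 0)))"

end

theory Submission
  imports Defs
begin

lemma pd_vec:
  fixes f :: "real \<times> real \<Rightarrow> 'a::real_normed_vector"
  assumes "(f has_derivative f') (at (s,t))"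
  shows "((\<lambda>x. f (x,t)) has_vector_derivative f' (1,0)) (at s)"
    and "((\<lambda>y. f (s,y)) has_vector_derivative f' (0,1)) (at t)"
proof -
  have lin: "linear f'" using assms has_derivative_linear by blast
  have d1: "((\<lambda>x. (x,t)) has_derivative (\<lambda>h. (h,0))) (at s)"
    by (rule has_derivative_Pair[OF has_derivative_ident has_derivative_const])
  have "((f \<circ> (\<lambda>x. (x,t))) has_derivative (f' \<circ> (\<lambda>h. (h,0)))) (at s)"
    by (rule diff_chain_at[OF d1]) (simp add: assms)
  moreover have "(f' \<circ> (\<lambda>h. (h,0))) = (\<lambda>h. h *\<^sub>R f' (1,0))"
  proof (rule ext)
    fix h :: real
    have "f' (h *\<^sub>R (1,0)) = h *\<^sub>R f' (1,0)" by (rule linear_scale[OF lin])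
    then show "(f' \<circ> (\<lambda>h. (h,0))) h = h *\<^sub>R f' (1,0)" by simp
  qed
  ultimately show "((\<lambda>x. f (x,t)) has_vector_derivative f' (1,0)) (at s)"
    by (simp add: has_vector_derivative_def o_def)
  have d2: "((\<lambda>y. (s,y)) has_derivative (\<lambda>h. (0,h))) (at t)"
    by (rule has_derivative_Pair[OF has_derivative_const has_derivative_ident])
  have "((f \<circ> (\<lambda>y. (s,y))) has_derivative (f' \<circ> (\<lambda>h. (0,h)))) (at t)"
    by (rule diff_chain_at[OF d2]) (simp add: assms)
  moreover have "(f' \<circ> (\<lambda>h. (0,h))) = (\<lambda>h. h *\<^sub>R f' (0,1))"
  proof (rule ext)
    fix h :: real
    have "f' (h *\<^sub>R (0,1)) = h *\<^sub>R f' (0,1)" by (rule linear_scale[OF lin])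
    then show "(f' \<circ> (\<lambda>h. (0,h))) h = h *\<^sub>R f' (0,1)" by simp
  qed
  ultimately show "((\<lambda>y. f (s,y)) has_vector_derivative f' (0,1)) (at t)"
    by (simp add: has_vector_derivative_def o_def)
qed

lemma pd:
  fixes f :: "real \<times> real \<Rightarrow> 'a::real_normed_vector"
  assumes "(f has_derivative f') (at x)"
  shows "pu f x = f' (1,0)" "pv f x = f' (0,1)"
proof -
  obtain s t where x: "x = (s,t)" by (cases x)
  show "pu f x = f' (1,0)" unfolding pu_def x
    using pd_vec(1)[OF assms[unfolded x]] by (simp add: vector_derivative_at)
  show "pv f x = f' (0,1)" unfolding pv_def x
    using pd_vec(2)[OF assms[unfolded x]] by (simp add: vector_derivative_at)
qed

lemma pd_real:
  fixes g :: "real \<times> real \<Rightarrow> real"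
  assumes "(g has_derivative (\<lambda>(du,dv). du * A + dv * B)) (at (s,t))"
  shows "((\<lambda>x. g (x,t)) has_real_derivative A) (at s)"
    and "((\<lambda>y. g (s,y)) has_real_derivative B) (at t)"
  using pd_vec[OF assms]
  by (simp_all add: has_real_derivative_iff_has_vector_derivative)

lemma abs_aux: "\<bar>(a::real) - c\<bar> < \<bar>c - b\<bar> / 2 \<Longrightarrow> \<bar>a' - b\<bar> < \<bar>c - b\<bar> / 2 \<Longrightarrow> a = a' \<Longrightarrow> False"
  by (auto simp: abs_if split: if_split_asm)

lemma schwarz:
  fixes g :: "real \<times> real \<Rightarrow> real"
  assumes g: "\<And>p. (g has_derivative (\<lambda>(du,dv). du * gu p + dv * gv p)) (at p)"
  and gu: "\<And>p. (gu has_derivative (\<lambda>(du,dv). du * guu p + dv * guv p)) (at p)"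
  and gv: "\<And>p. (gv has_derivative (\<lambda>(du,dv). du * gvu p + dv * gvv p)) (at p)"
  and c1: "continuous_on UNIV guv" and c2: "continuous_on UNIV gvu"
  shows "guv z = gvu z"
proof -
  obtain x y where z: "z = (x,y)" by (cases z)
  have key: "\<exists>s1 t1 s2 t2. x < s1 \<and> s1 < x + h \<and> y < t1 \<and> t1 < y + h
     \<and> x < s2 \<and> s2 < x + h \<and> y < t2 \<and> t2 < y + h \<and> guv (s1,t1) = gvu (s2,t2)" if h: "h > 0" for h
  proof -
    define \<Delta> where "\<Delta> = g(x+h,y+h) - g(x+h,y) - g(x,y+h) + g(x,y)"
    have hx: "x < x + h" "y < y + h" using h by auto
    obtain s1 where s1: "x < s1" "s1 < x + h"
      "(g(x+h,y+h) - g(x+h,y)) - (g(x,y+h) - g(x,y)) = ((x+h) - x) * (gu(s1,y+h) - gu(s1,y))"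
      using MVT2[OF hx(1), of "\<lambda>s. g(s,y+h) - g(s,y)" "\<lambda>s. gu(s,y+h) - gu(s,y)"]
      DERIV_diff[OF pd_real(1)[OF g] pd_real(1)[OF g]] by blast
    obtain t1 where t1: "y < t1" "t1 < y + h"
      "gu(s1,y+h) - gu(s1,y) = ((y+h) - y) * guv(s1,t1)"
      using MVT2[OF hx(2), of "\<lambda>t. gu(s1,t)" "\<lambda>t. guv(s1,t)"]
      pd_real(2)[OF gu] by blast
    obtain t2 where t2: "y < t2" "t2 < y + h"
      "(g(x+h,y+h) - g(x,y+h)) - (g(x+h,y) - g(x,y)) = ((y+h) - y) * (gv(x+h,t2) - gv(x,t2))"
      using MVT2[OF hx(2), of "\<lambda>t. g(x+h,t) - g(x,t)" "\<lambda>t. gv(x+h,t) - gv(x,t)"]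
      DERIV_diff[OF pd_real(2)[OF g] pd_real(2)[OF g]] by blast
    obtain s2 where s2: "x < s2" "s2 < x + h"
      "gv(x+h,t2) - gv(x,t2) = ((x+h) - x) * gvu(s2,t2)"
      using MVT2[OF hx(1), of "\<lambda>s. gv(s,t2)" "\<lambda>s. gvu(s,t2)"]
      pd_real(1)[OF gv] by blast
    have "h * (h * guv(s1,t1)) = h * (h * gvu(s2,t2))"
      using s1(3) t1(3) t2(3) s2(3) by (simp add: algebra_simps)
    then have "guv(s1,t1) = gvu(s2,t2)" using h by simp
    then show ?thesis using s1 t1 s2 t2 by blast
  qed
  show ?thesis
  proof (rule ccontr)
    assume ne: "guv z \<noteq> gvu z"
    define e where "e = \<bar>guv z - gvu z\<bar> / 2"
    have e: "e > 0" using ne by (simp add: e_def)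
    have i1: "isCont guv z" and i2: "isCont gvu z"
      using c1 c2 by (meson UNIV_I continuous_on_eq_continuous_at open_UNIV)+
    obtain d1 where d1: "d1 > 0" "\<And>w. dist w z < d1 \<Longrightarrow> dist (guv w) (guv z) < e"
      using i1 e unfolding continuous_at_eps_delta by blast
    obtain d2 where d2: "d2 > 0" "\<And>w. dist w z < d2 \<Longrightarrow> dist (gvu w) (gvu z) < e"
      using i2 e unfolding continuous_at_eps_delta by blast
    define h where "h = min d1 d2 / 4"
    have h: "h > 0" using d1 d2 by (simp add: h_def)
    obtain s1 t1 s2 t2 where st: "x < s1" "s1 < x + h" "y < t1" "t1 < y + h"
      "x < s2" "s2 < x + h" "y < t2" "t2 < y + h" "guv (s1,t1) = gvu (s2,t2)"
      using key[OF h] by blast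
    have dd: "dist (a,b) z < 2*h" if "x < a" "a < x + h" "y < b" "b < y + h" for a b
    proof -
      have "dist (a,b) z = sqrt ((dist a x)\<^sup>2 + (dist b y)\<^sup>2)" by (simp add: z dist_Pair_Pair)
      also have "\<dots> \<le> \<bar>dist a x\<bar> + \<bar>dist b y\<bar>" by (rule sqrt_sum_squares_le_sum_abs)
      also have "\<dots> < 2*h" using that by (simp add: dist_real_def)
      finally show ?thesis .
    qed
    have "dist (guv (s1,t1)) (guv z) < e"
      using d1(2)[of "(s1,t1)"] dd[of s1 t1] st h_def by auto
    moreover have "dist (gvu (s2,t2)) (gvu z) < e"
      using d2(2)[of "(s2,t2)"] dd[of s2 t2] st h_def by auto
    ultimately show False using st(9) unfolding e_def dist_real_def using abs_aux by metis
  qed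
qed

lemma test4: "(1::4) \<noteq> 4" "(2::4) \<noteq> 4" "(3::4) \<noteq> 4" "(1::4) \<noteq> 2" "(1::4) \<noteq> 3" "(2::4) \<noteq> 3"
  by simp_all

definition D2 :: "(real \<times> real \<Rightarrow> 'a::real_normed_vector) \<Rightarrow> (real \<times> real \<Rightarrow> 'a) \<Rightarrow> (real \<times> real \<Rightarrow> 'a) \<Rightarrow> bool" where
  "D2 f fu fv = (\<forall>p. (f has_derivative (\<lambda>(du, dv). du *\<^sub>R fu p + dv *\<^sub>R fv p)) (at p))"

lemma D2_pu:
  assumes "D2 f fu fv"
  shows "pu f = fu" "pv f = fv"
proof -
  have "pu f x = fu x" "pv f x = fv x" for x
    using pd[OF assms[unfolded D2_def, rule_format, of x]] by simp_all
  then show "pu f = fu" "pv f = fv" by auto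
qed

lemma D2D: "D2 f fu fv \<Longrightarrow> (f has_derivative (\<lambda>(du, dv). du *\<^sub>R fu p + dv *\<^sub>R fv p)) (at p)"
  unfolding D2_def by blast

lemma Ck_SucD: "Ck (Suc k) f \<Longrightarrow> \<exists>fu fv. D2 f fu fv \<and> Ck k fu \<and> Ck k fv"
  by (simp add: D2_def)

lemma Ck_SucI: "D2 f fu fv \<Longrightarrow> Ck k fu \<Longrightarrow> Ck k fv \<Longrightarrow> Ck (Suc k) f"
  unfolding D2_def Ck.simps by blast

lemma smooth2_Ck: "smooth2 f \<Longrightarrow> Ck k f"
  by (simp add: smooth2_def)

lemma comp_deriv:
  fixes F :: "real \<times> real \<Rightarrow> 'a::real_normed_vector" and D :: "real \<times> real \<Rightarrow> real \<times> real"
  assumes F: "D2 F Fu Fv" and D: "D2 D Du Dv"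
  shows "((F \<circ> D) has_derivative (\<lambda>h. (fst h * fst (Du x) + snd h * fst (Dv x)) *\<^sub>R Fu (D x)
     + (fst h * snd (Du x) + snd h * snd (Dv x)) *\<^sub>R Fv (D x))) (at x)"
proof -
  have d1: "(D has_derivative (\<lambda>(du, dv). du *\<^sub>R Du x + dv *\<^sub>R Dv x)) (at x)"
    using D by (rule D2D)
  have d2: "(F has_derivative (\<lambda>(du, dv). du *\<^sub>R Fu (D x) + dv *\<^sub>R Fv (D x))) (at (D x))"
    using F by (rule D2D)
  have "((F \<circ> D) has_derivative ((\<lambda>(du, dv). du *\<^sub>R Fu (D x) + dv *\<^sub>R Fv (D x)) \<circ> (\<lambda>(du, dv). du *\<^sub>R Du x + dv *\<^sub>R Dv x))) (at x)"
    by (rule diff_chain_at[OF d1 d2])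
  moreover have "((\<lambda>(du, dv). du *\<^sub>R Fu (D x) + dv *\<^sub>R Fv (D x)) \<circ> (\<lambda>(du, dv). du *\<^sub>R Du x + dv *\<^sub>R Dv x))
     = (\<lambda>h. (fst h * fst (Du x) + snd h * fst (Dv x)) *\<^sub>R Fu (D x)
     + (fst h * snd (Du x) + snd h * snd (Dv x)) *\<^sub>R Fv (D x))"
    by (simp add: fun_eq_iff split_beta)
  ultimately show ?thesis by simp
qed

lemma chain:
  fixes S :: "real \<times> real \<Rightarrow> 'a::real_normed_vector" and D :: "real \<times> real \<Rightarrow> real \<times> real"
  assumes S: "D2 S Su Sv" and Su: "D2 Su Suu Suv" and Sv: "D2 Sv Svu Svv"
    and D: "D2 D Du Dv" and Du: "D2 Du Duu Duv"
  shows "pu (S \<circ> D) = (\<lambda>x. fst (Du x) *\<^sub>R Su (D x) + snd (Du x) *\<^sub>R Sv (D x))"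
    and "pv (S \<circ> D) x = fst (Dv x) *\<^sub>R Su (D x) + snd (Dv x) *\<^sub>R Sv (D x)"
    and "pv (pu (S \<circ> D)) x = fst (Duv x) *\<^sub>R Su (D x) + snd (Duv x) *\<^sub>R Sv (D x)
        + fst (Du x) *\<^sub>R (fst (Dv x) *\<^sub>R Suu (D x) + snd (Dv x) *\<^sub>R Suv (D x))
        + snd (Du x) *\<^sub>R (fst (Dv x) *\<^sub>R Svu (D x) + snd (Dv x) *\<^sub>R Svv (D x))"
proof -
  show 1: "pu (S \<circ> D) = (\<lambda>x. fst (Du x) *\<^sub>R Su (D x) + snd (Du x) *\<^sub>R Sv (D x))"
  proof (rule ext)
    fix y
    show "pu (S \<circ> D) y = fst (Du y) *\<^sub>R Su (D y) + snd (Du y) *\<^sub>R Sv (D y)"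
      using pd(1)[OF comp_deriv[OF S D, of y]] by simp
  qed
  show "pv (S \<circ> D) x = fst (Dv x) *\<^sub>R Su (D x) + snd (Dv x) *\<^sub>R Sv (D x)"
    using pd(2)[OF comp_deriv[OF S D, of x]] by simp
  have dDu: "(Du has_derivative (\<lambda>(du, dv). du *\<^sub>R Duu x + dv *\<^sub>R Duv x)) (at x)"
    using Du by (rule D2D)
  note f1 = has_derivative_fst[OF dDu]
  note f2 = has_derivative_snd[OF dDu]
  note g = has_derivative_add[OF has_derivative_scaleR[OF f1 comp_deriv[OF Su D, of x]]
                                 has_derivative_scaleR[OF f2 comp_deriv[OF Sv D, of x]]]
  have e: "pu (S \<circ> D) = (\<lambda>y. fst (Du y) *\<^sub>R (Su \<circ> D) y + snd (Du y) *\<^sub>R (Sv \<circ> D) y)"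
    unfolding 1 by (simp add: o_def)
  show "pv (pu (S \<circ> D)) x = fst (Duv x) *\<^sub>R Su (D x) + snd (Duv x) *\<^sub>R Sv (D x)
        + fst (Du x) *\<^sub>R (fst (Dv x) *\<^sub>R Suu (D x) + snd (Dv x) *\<^sub>R Suv (D x))
        + snd (Du x) *\<^sub>R (fst (Dv x) *\<^sub>R Svu (D x) + snd (Dv x) *\<^sub>R Svv (D x))"
    unfolding e using pd(2)[OF g] by (simp add: algebra_simps)
qed

lemma mink_add_left[simp]: "mink (X + Y) Z = mink X Z + mink Y Z"
  by (simp add: mink_def algebra_simps)
lemma mink_scale_left[simp]: "mink (a *\<^sub>R X) Z = a * mink X Z"
  by (simp add: mink_def algebra_simps)
lemma mink_zero_left[simp]: "mink 0 Z = 0"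
  by (simp add: mink_def)
lemma mink_comm: "mink X Y = mink Y X"
  by (simp add: mink_def algebra_simps)

lemma mink_bl: "bounded_linear (\<lambda>X. mink X c)"
proof -
  have "linear (\<lambda>X. mink X c)" by (rule linearI) simp_all
  then show ?thesis by (simp add: linear_conv_bounded_linear)
qed

lemma mink_D2:
  assumes "D2 F Fu Fv"
  shows "((\<lambda>x. mink (F x) c) has_derivative (\<lambda>(du, dv). du * mink (Fu p) c + dv * mink (Fv p) c)) (at p)"
proof -
  have d: "(F has_derivative (\<lambda>(du, dv). du *\<^sub>R Fu p + dv *\<^sub>R Fv p)) (at p)"
    using assms by (rule D2D)
  have "((\<lambda>x. mink (F x) c) has_derivative (\<lambda>h. mink ((\<lambda>(du, dv). du *\<^sub>R Fu p + dv *\<^sub>R Fv p) h) c)) (at p)"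
    by (rule bounded_linear.has_derivative[OF mink_bl d])
  moreover have "(\<lambda>h. mink ((\<lambda>(du, dv). du *\<^sub>R Fu p + dv *\<^sub>R Fv p) h) c) = (\<lambda>(du, dv). du * mink (Fu p) c + dv * mink (Fv p) c)"
    by (simp add: fun_eq_iff split_beta)
  ultimately show ?thesis by simp
qed

lemma mink_sym:
  assumes S: "D2 S Su Sv" and Su: "D2 Su Suu Suv" and Sv: "D2 Sv Svu Svv"
   and c1: "continuous_on UNIV Suv" and c2: "continuous_on UNIV Svu"
  shows "mink (Suv z) c = mink (Svu z) c"
  by (rule schwarz[where g="\<lambda>x. mink (S x) c" and gu="\<lambda>x. mink (Su x) c" and gv="\<lambda>x. mink (Sv x) c"
     and guu = "\<lambda>x. mink (Suu x) c" and gvv = "\<lambda>x. mink (Svv x) c"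
     and guv = "\<lambda>x. mink (Suv x) c" and gvu = "\<lambda>x. mink (Svu x) c",
     OF mink_D2[OF S] mink_D2[OF Su] mink_D2[OF Sv]])
   (rule bounded_linear.continuous_on[OF mink_bl], fact)+

lemma normal_par:
  assumes N: "N \<noteq> 0" and perp: "\<forall>Y. par_plane Pl Y \<longrightarrow> mink N Y = 0" and m: "mink N Y = 0"
  shows "par_plane Pl Y"
proof -
  obtain n h where Pl: "Pl = (n, h)" by (cases Pl)
  define Y1 :: "real^4" where "Y1 = (\<chi> i. if i = 1 then 1 else if i = 4 then n$1 else 0)"
  define Y2 :: "real^4" where "Y2 = (\<chi> i. if i = 2 then 1 else if i = 4 then n$2 else 0)"
  define Y3 :: "real^4" where "Y3 = (\<chi> i. if i = 3 then 1 else if i = 4 then n$3 else 0)"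
  have "par_plane Pl Y1" "par_plane Pl Y2" "par_plane Pl Y3"
    by (simp_all add: par_plane_def Pl Y1_def Y2_def Y3_def)
  then have "mink N Y1 = 0" "mink N Y2 = 0" "mink N Y3 = 0" using perp by auto
  then have e: "N$1 = N$4 * n$1" "N$2 = N$4 * n$2" "N$3 = N$4 * n$3"
    by (simp_all add: mink_def Y1_def Y2_def Y3_def)
  have n4: "N$4 \<noteq> 0"
  proof
    assume "N$4 = 0"
    then have "\<forall>i. N$i = 0" using e by (simp add: forall_4)
    then have "N = 0" by (simp add: vec_eq_iff)
    then show False using N by simp
  qed
  have "N$4 * (n$1 * Y$1 + n$2 * Y$2 + n$3 * Y$3 - Y$4) = 0"
    using m e by (simp add: mink_def algebra_simps)
  then show ?thesis using n4 by (simp add: par_plane_def Pl)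
qed

lemma const_D2: "D2 (\<lambda>_. c) (\<lambda>_. 0) (\<lambda>_. 0)"
proof -
  have "(\<lambda>(du::real, dv::real). du *\<^sub>R (0::'a) + dv *\<^sub>R 0) = (\<lambda>_. 0)"
    by (simp add: fun_eq_iff split_beta)
  then show ?thesis unfolding D2_def by (simp add: has_derivative_const)
qed

lemma Ck_const: "Ck k (\<lambda>_. c)"
proof (induction k arbitrary: c)
  case 0 then show ?case by simp
next
  case (Suc k)
  show ?case by (rule Ck_SucI[OF const_D2 Suc.IH Suc.IH])
qed

lemma affine_D2: "D2 (\<lambda>w. fst w *\<^sub>R u + snd w *\<^sub>R v + c) (\<lambda>_. u) (\<lambda>_. v)"
proof -
  have bl: "bounded_linear (\<lambda>w::real\<times>real. fst w *\<^sub>R u + snd w *\<^sub>R v)"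
    by (rule bounded_linear_add[OF bounded_linear_compose[OF bounded_linear_scaleR_left bounded_linear_fst]
          bounded_linear_compose[OF bounded_linear_scaleR_left bounded_linear_snd]])
  have e: "(\<lambda>w::real\<times>real. fst w *\<^sub>R u + snd w *\<^sub>R v) = (\<lambda>(du, dv). du *\<^sub>R u + dv *\<^sub>R v)"
    by (simp add: fun_eq_iff split_beta)
  show ?thesis unfolding D2_def e[symmetric]
    by (intro allI has_derivative_add_const bounded_linear_imp_has_derivative bl)
qed

lemma Ck_affine: "Ck k (\<lambda>w. fst w *\<^sub>R u + snd w *\<^sub>R v + c)"
proof (cases k)
  case 0 then show ?thesis by (auto intro!: continuous_intros)
next
  case (Suc m)
  show ?thesis unfolding Suc by (rule Ck_SucI[OF affine_D2 Ck_const Ck_const])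
qed

lemma smooth2_affine: "smooth2 (\<lambda>w. fst w *\<^sub>R u + snd w *\<^sub>R v + c)"
  by (simp add: smooth2_def Ck_affine)

lemma indep:
  assumes "nonpar U V" "x *\<^sub>R U + y *\<^sub>R V = 0"
  shows "x = 0 \<and> y = 0"
proof (cases "x = 0")
  case True
  then have "y *\<^sub>R V = 0" using assms(2) by simp
  moreover have "V \<noteq> 0" using assms(1) unfolding nonpar_def by (metis scaleR_zero_left)
  ultimately show ?thesis using True by simp
next
  case False
  have "U = (1/x) *\<^sub>R (x *\<^sub>R U)" using False by simp
  also have "x *\<^sub>R U = - (y *\<^sub>R V)" using assms(2) by (simp add: eq_neg_iff_add_eq_0)
  finally have "U = (- y / x) *\<^sub>R V" by simp
  then show ?thesis using assms(1) unfolding nonpar_def by blast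
qed

lemma par_plane_lin: "par_plane Pl X \<Longrightarrow> par_plane Pl Y \<Longrightarrow> par_plane Pl (a *\<^sub>R X + b *\<^sub>R Y)"
  by (simp add: par_plane_def algebra_simps)


lemma aux_div:
  fixes dt :: real
  assumes "dt \<noteq> 0" "A * a + B * b = X * dt"
  shows "(A / dt) * a + (B / dt) * b = X"
proof -
  have "(A / dt) * a + (B / dt) * b = (A * a + B * b) / dt" by (simp add: add_divide_distrib)
  also have "\<dots> = X" using assms by simp
  finally show ?thesis .
qed

lemma nonpar_nz: "nonpar A B \<Longrightarrow> A \<noteq> 0 \<and> B \<noteq> 0"
  unfolding nonpar_def by (metis scaleR_zero_left)

theorem theorem1:
  fixes S :: "real \<times> real \<Rightarrow> real^4"
    and P :: "real \<times> real \<Rightarrow> gamma_plane"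
    and N :: "real \<times> real \<Rightarrow> real^4"
    and p :: "real \<times> real"
    and a1 a2 b1 b2 :: real
  assumes "regular_net S"
    and "tangent_congruence S P"
    and "normal_field P N"
    and "nonpar (a1 *\<^sub>R pu S p + a2 *\<^sub>R pv S p) (b1 *\<^sub>R pu S p + b2 *\<^sub>R pv S p)"
  shows "L_conjugate S P p (a1 *\<^sub>R pu S p + a2 *\<^sub>R pv S p) (b1 *\<^sub>R pu S p + b2 *\<^sub>R pv S p)
     \<longleftrightarrow> mink (pu (pu S) p) (N p) * a1 * b1
         + mink (pv (pu S) p) (N p) * (a1 * b2 + a2 * b1)
         + mink (pv (pv S) p) (N p) * a2 * b2 = 0"
proof -
  have sm: "smooth2 S" and np: "\<And>x. nonpar (pu S x) (pv S x)"
    using assms(1) by (auto simp: regular_net_def)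
  obtain fu fv where dS: "D2 S fu fv" and cfu: "Ck (Suc 0) fu" and cfv: "Ck (Suc 0) fv"
    using Ck_SucD[OF smooth2_Ck[OF sm, of "Suc (Suc 0)"]] by blast
  obtain fuu fuv where dfu: "D2 fu fuu fuv" and c_uv: "Ck 0 fuv"
    using Ck_SucD[OF cfu] by blast
  obtain fvu fvv where dfv: "D2 fv fvu fvv" and c_vu: "Ck 0 fvu"
    using Ck_SucD[OF cfv] by blast
  have puS: "pu S = fu" "pv S = fv" using D2_pu[OF dS] by auto
  have puu: "pu fu = fuu" "pv fu = fuv" using D2_pu[OF dfu] by auto
  have pvv: "pu fv = fvu" "pv fv = fvv" using D2_pu[OF dfv] by auto
  have sym: "\<And>z c. mink (fuv z) c = mink (fvu z) c"
    by (rule mink_sym[OF dS dfu dfv]) (use c_uv c_vu in simp)+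
  have tc: "\<And>x. par_plane (P x) (fu x)" "\<And>x. par_plane (P x) (fv x)"
    using assms(2) puS by (auto simp: tangent_congruence_def)
  have nf: "N p \<noteq> 0" "\<forall>Y. par_plane (P p) Y \<longrightarrow> mink (N p) Y = 0"
    using assms(3) unfolding normal_field_def by blast+
  have m0: "mink (fu p) (N p) = 0" "mink (fv p) (N p) = 0"
    using nf(2) tc mink_comm by metis+
  have npp: "nonpar (fu p) (fv p)" using np[of p] puS by simp
  have AB: "nonpar (a1 *\<^sub>R fu p + a2 *\<^sub>R fv p) (b1 *\<^sub>R fu p + b2 *\<^sub>R fv p)"
    using assms(4) puS by simp
  define L where "L = mink (fuu p) (N p)"
  define M where "M = mink (fuv p) (N p)"
  define Nn where "Nn = mink (fvv p) (N p)"
  have M': "mink (fvu p) (N p) = M" using sym M_def by simp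
  show ?thesis
    unfolding puS puu pvv L_def[symmetric] M_def[symmetric] Nn_def[symmetric]
  proof
    assume "L_conjugate S P p (a1 *\<^sub>R fu p + a2 *\<^sub>R fv p) (b1 *\<^sub>R fu p + b2 *\<^sub>R fv p)"
    then obtain D q where dD: "diffeo2 D" and Dq: "D q = p"
      and v1: "vpar (pu (S \<circ> D) q) (a1 *\<^sub>R fu p + a2 *\<^sub>R fv p)"
      and v2: "vpar (pv (S \<circ> D) q) (b1 *\<^sub>R fu p + b2 *\<^sub>R fv p)"
      and pp: "par_plane ((P \<circ> D) q) (pv (pu (S \<circ> D)) q)"
      unfolding L_conjugate_def Let_def by blast
    have smD: "smooth2 D" using dD by (simp add: diffeo2_def)
    obtain Du Dv where dD2: "D2 D Du Dv" and cDu: "Ck (Suc 0) Du"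
      using Ck_SucD[OF smooth2_Ck[OF smD, of "Suc (Suc 0)"]] by blast
    obtain Duu Duv where dDu: "D2 Du Duu Duv"
      using Ck_SucD[OF cDu] by blast
    note ch = chain[OF dS dfu dfv dD2 dDu]
    define \<alpha>1 where "\<alpha>1 = fst (Du q)"
    define \<alpha>2 where "\<alpha>2 = snd (Du q)"
    define \<beta>1 where "\<beta>1 = fst (Dv q)"
    define \<beta>2 where "\<beta>2 = snd (Dv q)"
    have u: "pu (S \<circ> D) q = \<alpha>1 *\<^sub>R fu p + \<alpha>2 *\<^sub>R fv p"
      using ch(1) Dq by (simp add: \<alpha>1_def \<alpha>2_def)
    have v: "pv (S \<circ> D) q = \<beta>1 *\<^sub>R fu p + \<beta>2 *\<^sub>R fv p"
      using ch(2)[of q] Dq by (simp add: \<beta>1_def \<beta>2_def)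
    have uv: "pv (pu (S \<circ> D)) q = fst (Duv q) *\<^sub>R fu p + snd (Duv q) *\<^sub>R fv p
        + \<alpha>1 *\<^sub>R (\<beta>1 *\<^sub>R fuu p + \<beta>2 *\<^sub>R fuv p)
        + \<alpha>2 *\<^sub>R (\<beta>1 *\<^sub>R fvu p + \<beta>2 *\<^sub>R fvv p)"
      using ch(3)[of q] Dq by (simp add: \<alpha>1_def \<alpha>2_def \<beta>1_def \<beta>2_def)
    obtain c where c: "pu (S \<circ> D) q = c *\<^sub>R (a1 *\<^sub>R fu p + a2 *\<^sub>R fv p)" and nz1: "pu (S \<circ> D) q \<noteq> 0"
      using v1 unfolding vpar_def by blast
    obtain d where d: "pv (S \<circ> D) q = d *\<^sub>R (b1 *\<^sub>R fu p + b2 *\<^sub>R fv p)" and nz2: "pv (S \<circ> D) q \<noteq> 0"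
      using v2 unfolding vpar_def by blast
    have "(\<alpha>1 - c * a1) *\<^sub>R fu p + (\<alpha>2 - c * a2) *\<^sub>R fv p
        = pu (S \<circ> D) q - c *\<^sub>R (a1 *\<^sub>R fu p + a2 *\<^sub>R fv p)"
      unfolding u by (simp add: algebra_simps)
    then have "(\<alpha>1 - c * a1) *\<^sub>R fu p + (\<alpha>2 - c * a2) *\<^sub>R fv p = 0" using c by simp
    then have "\<alpha>1 - c * a1 = 0 \<and> \<alpha>2 - c * a2 = 0" by (rule indep[OF npp])
    then have a: "\<alpha>1 = c * a1" "\<alpha>2 = c * a2" by auto
    have "(\<beta>1 - d * b1) *\<^sub>R fu p + (\<beta>2 - d * b2) *\<^sub>R fv p
        = pv (S \<circ> D) q - d *\<^sub>R (b1 *\<^sub>R fu p + b2 *\<^sub>R fv p)"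
      unfolding v by (simp add: algebra_simps)
    then have "(\<beta>1 - d * b1) *\<^sub>R fu p + (\<beta>2 - d * b2) *\<^sub>R fv p = 0" using d by simp
    then have "\<beta>1 - d * b1 = 0 \<and> \<beta>2 - d * b2 = 0" by (rule indep[OF npp])
    then have b: "\<beta>1 = d * b1" "\<beta>2 = d * b2" by auto
    have c0: "c \<noteq> 0" using c nz1 by auto
    have d0: "d \<noteq> 0" using d nz2 by auto
    have "mink (N p) (pv (pu (S \<circ> D)) q) = 0" using pp nf(2) Dq by simp
    then have "mink (pv (pu (S \<circ> D)) q) (N p) = 0" by (simp add: mink_comm)
    then have E: "\<alpha>1 * (\<beta>1 * L + \<beta>2 * M) + \<alpha>2 * (\<beta>1 * M + \<beta>2 * Nn) = 0"
      unfolding uv by (simp add: m0 M' L_def[symmetric] M_def[symmetric] Nn_def[symmetric])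
    have "c * d * (L * a1 * b1 + M * (a1 * b2 + a2 * b1) + Nn * a2 * b2)
        = \<alpha>1 * (\<beta>1 * L + \<beta>2 * M) + \<alpha>2 * (\<beta>1 * M + \<beta>2 * Nn)"
      unfolding a b by (simp add: algebra_simps)
    then show "L * a1 * b1 + M * (a1 * b2 + a2 * b1) + Nn * a2 * b2 = 0"
      using E c0 d0 by simp
  next
    assume form: "L * a1 * b1 + M * (a1 * b2 + a2 * b1) + Nn * a2 * b2 = 0"
    define A where "A = a1 *\<^sub>R fu p + a2 *\<^sub>R fv p"
    define B where "B = b1 *\<^sub>R fu p + b2 *\<^sub>R fv p"
    define dt where "dt = a1 * b2 - a2 * b1"
    have dt: "dt \<noteq> 0"
    proof
      assume dt0: "dt = 0"
      have ABn: "nonpar A B" using AB by (simp add: A_def B_def)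
      show False
      proof (cases "b1 = 0")
        case True
        then have "b2 \<noteq> 0" using nonpar_nz[OF ABn] B_def by auto
        then have "a1 = 0" using dt0 True by (simp add: dt_def)
        then have "A = (a2 / b2) *\<^sub>R B" using \<open>b2 \<noteq> 0\<close> True by (simp add: A_def B_def)
        then show False using ABn unfolding nonpar_def by blast
      next
        case False
        have "a2 = (a1 / b1) * b2" using dt0 False by (simp add: dt_def field_simps)
        then have "A = (a1 / b1) *\<^sub>R B" using False by (simp add: A_def B_def algebra_simps)
        then show False using ABn unfolding nonpar_def by blast
      qed
    qed
    define D where "D = (\<lambda>w::real\<times>real. fst w *\<^sub>R (a1, a2) + snd w *\<^sub>R (b1, b2) + p)"
    define E where "E = (\<lambda>y::real\<times>real. ((b2 * (fst y - fst p) - b1 * (snd y - snd p)) / dt,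
                                  (a1 * (snd y - snd p) - a2 * (fst y - fst p)) / dt))"
    have Dw: "D w = (fst w * a1 + snd w * b1 + fst p, fst w * a2 + snd w * b2 + snd p)" for w
      by (cases p) (simp add: D_def)
    have ED: "E (D w) = w" for w
    proof -
      have 1: "b2 * (fst w * a1 + snd w * b1) - b1 * (fst w * a2 + snd w * b2) = fst w * dt"
        by (simp add: dt_def algebra_simps)
      have 2: "a1 * (fst w * a2 + snd w * b2) - a2 * (fst w * a1 + snd w * b1) = snd w * dt"
        by (simp add: dt_def algebra_simps)
      show ?thesis unfolding E_def Dw using 1 2 dt by (simp add: prod_eq_iff)
    qed
    have DE: "D (E y) = y" for y
    proof -
      define X where "X = fst y - fst p"
      define Y where "Y = snd y - snd p"
      have 1: "(b2 * X - b1 * Y) * a1 + (a1 * Y - a2 * X) * b1 = X * dt"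
        by (simp add: dt_def algebra_simps)
      have 2: "(b2 * X - b1 * Y) * a2 + (a1 * Y - a2 * X) * b2 = Y * dt"
        by (simp add: dt_def algebra_simps)
      have E: "E y = ((b2 * X - b1 * Y) / dt, (a1 * Y - a2 * X) / dt)"
        by (simp add: E_def X_def Y_def)
      show ?thesis unfolding Dw E
        using aux_div[OF dt 1] aux_div[OF dt 2] by (simp add: X_def Y_def prod_eq_iff)
    qed
    have bijD: "bij D" by (rule o_bij[of E D]) (simp_all add: fun_eq_iff ED DE)
    have invD: "inv D = E" by (rule inv_equality) (simp_all add: ED DE)
    have Eaff: "E = (\<lambda>y. fst y *\<^sub>R (b2 / dt, - a2 / dt) + snd y *\<^sub>R (- b1 / dt, a1 / dt)
        + (- (b2 * fst p - b1 * snd p) / dt, - (a1 * snd p - a2 * fst p) / dt))"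
      using dt by (simp add: E_def fun_eq_iff prod_eq_iff field_simps)
    have dif: "diffeo2 D"
    proof -
      have "smooth2 D" unfolding D_def by (rule smooth2_affine)
      moreover have "smooth2 E" unfolding Eaff by (rule smooth2_affine)
      ultimately show ?thesis unfolding diffeo2_def invD using bijD by blast
    qed
    have Dq: "D (0, 0) = p" by (simp add: D_def zero_prod_def)
    have dD2: "D2 D (\<lambda>_. (a1, a2)) (\<lambda>_. (b1, b2))" unfolding D_def by (rule affine_D2)
    note ch = chain[OF dS dfu dfv dD2 const_D2]
    have u: "pu (S \<circ> D) (0, 0) = A" using ch(1) Dq by (simp add: A_def)
    have v: "pv (S \<circ> D) (0, 0) = B" using ch(2)[of "(0,0)"] Dq by (simp add: B_def)
    have uv: "pv (pu (S \<circ> D)) (0, 0) = a1 *\<^sub>R (b1 *\<^sub>R fuu p + b2 *\<^sub>R fuv p) + a2 *\<^sub>R (b1 *\<^sub>R fvu p + b2 *\<^sub>R fvv p)"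
      using ch(3)[of "(0,0)"] Dq by simp
    have nzA: "A \<noteq> 0" and nzB: "B \<noteq> 0" using nonpar_nz AB by (auto simp: A_def B_def)
    have vA: "vpar A A" using nzA unfolding vpar_def by (metis scaleR_one)
    have vB: "vpar B B" using nzB unfolding vpar_def by (metis scaleR_one)
    have pA: "par_plane (P p) A" unfolding A_def by (rule par_plane_lin[OF tc])
    have pB: "par_plane (P p) B" unfolding B_def by (rule par_plane_lin[OF tc])
    have "mink (pv (pu (S \<circ> D)) (0, 0)) (N p) = L * a1 * b1 + M * (a1 * b2 + a2 * b1) + Nn * a2 * b2"
      unfolding uv by (simp add: M' L_def[symmetric] M_def[symmetric] Nn_def[symmetric] algebra_simps)
    then have "mink (N p) (pv (pu (S \<circ> D)) (0, 0)) = 0" using form by (simp add: mink_comm)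
    then have puv: "par_plane (P p) (pv (pu (S \<circ> D)) (0, 0))" by (rule normal_par[OF nf])
    have "nonpar A B" using AB by (simp add: A_def B_def)
    then have "L_conjugate S P p A B"
      unfolding L_conjugate_def Let_def
      using dif Dq u v vA vB pA pB puv by (intro conjI exI[of _ D] exI[of _ "(0,0)"]) auto
    then show "L_conjugate S P p (a1 *\<^sub>R fu p + a2 *\<^sub>R fv p) (b1 *\<^sub>R fu p + b2 *\<^sub>R fv p)"
      by (simp add: A_def B_def)
  qed
qed

end
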